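(* Let $\omega$ be a non-quasianalytic weight function and $\sigma$ a heir of $\omega$, with associated weight matrices $\{W^x\}_{x>0}$ and $\{S^x\}_{x>0}$ respectively. Then there is $C\ge1$ such that for all $x>0$ and all $k\in\mathbb{N}$, $S^x_k\le e^{1/x}W^{Cx}_k$.
   Context: A weight function is a continuous increasing $\omega:[0,\infty)\to[0,\infty)$ with $\omega(0)=0$, $\omega(t)\to\infty$, $\omega(2t)=O(\omega(t))$, $\omega(t)=O(t)$, $\log t=o(\omega(t))$, and $\varphi_\omega(t)=\omega(e^t)$ convex; it is non-quasianalytic if $\int_0^\infty\frac{\omega(t)}{1+t^2}dt<\infty$. Normalizing $\omega|_{[0,1]}=0$, $\varphi_\omega^*(t)=\sup_{s\ge0}(st-\varphi_\omega(s))$ and the weight matrix is $W^x_k=\exp(\frac1x\varphi_\omega^*(xk))$; likewise $S^x_k=\exp(\frac1x\varphi^*_\sigma(xk))$. A weight function $\sigma$ is a heir of $\omega$ if $\sigma(t)=o(t)$ as $t\to\infty$ and there is $C>0$ with $\int_1^\infty\frac{\omega(tu)}{u^2}du\le C\sigma(t)+C$ for all $t>0$. *)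

theory Defs
  imports "HOL-Analysis.Analysis" "HOL-Library.Landau_Symbols"
begin

definition weight_function :: "(real \<Rightarrow> real) \<Rightarrow> bool" where
  "weight_function \<omega> \<longleftrightarrow>
     continuous_on {0..} \<omega> \<and>
     mono_on {0..} \<omega> \<and>
     (\<forall>t\<ge>0. \<omega> t \<ge> 0) \<and>
     \<omega> 0 = 0 \<and>
     filterlim \<omega> at_top at_top \<and>
     (\<lambda>t. \<omega> (2 * t)) \<in> O[at_top](\<omega>) \<and>
     \<omega> \<in> O[at_top](\<lambda>t. t) \<and>
     ln \<in> o[at_top](\<omega>) \<and>
     convex_on UNIV (\<lambda>t. \<omega> (exp t))"

definition non_quasianalytic :: "(real \<Rightarrow> real) \<Rightarrow> bool" where
  "non_quasianalytic \<omega> \<longleftrightarrow> (\<lambda>t. \<omega> t / (1 + t\<^sup>2)) integrable_on {0..}"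

text \<open>Young conjugate of \<open>\<phi>\<^sub>\<omega>(t) = \<omega>(e^t)\<close>.\<close>
definition phi_conj :: "(real \<Rightarrow> real) \<Rightarrow> real \<Rightarrow> real" where
  "phi_conj \<omega> t = (SUP s\<in>{0..}. s * t - \<omega> (exp s))"

definition weight_matrix :: "(real \<Rightarrow> real) \<Rightarrow> real \<Rightarrow> nat \<Rightarrow> real" where
  "weight_matrix \<omega> x k = exp (phi_conj \<omega> (x * real k) / x)"

definition heir :: "(real \<Rightarrow> real) \<Rightarrow> (real \<Rightarrow> real) \<Rightarrow> bool" where
  "heir \<sigma> \<omega> \<longleftrightarrow> weight_function \<sigma> \<and> \<sigma> \<in> o[at_top](\<lambda>t. t) \<and>
     (\<exists>C>0. \<forall>t>0. (\<lambda>u. \<omega> (t * u) / u\<^sup>2) integrable_on {1..} \<and>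
        integral {1..} (\<lambda>u. \<omega> (t * u) / u\<^sup>2) \<le> C * \<sigma> t + C)"

end

theory Submission
  imports Defs
begin

lemma bdd_conj:
  assumes wf: "weight_function \<omega>" and a: "a \<ge> 0"
  shows "bdd_above ((\<lambda>s. s * a - \<omega> (exp s)) ` {0..})"
proof -
  have lo: "ln \<in> o[at_top](\<omega>)" using wf unfolding weight_function_def by blast
  have "\<forall>\<^sub>F t in at_top. norm (ln t) \<le> (1/(a+1)) * norm (\<omega> t)"
    using landau_o.smallD[OF lo, of "1/(a+1)"] a by simp
  then obtain T where T: "\<And>t. t \<ge> T \<Longrightarrow> norm (ln t) \<le> (1/(a+1)) * norm (\<omega> t)"
    by (auto simp: eventually_at_top_linorder)
  define S0 where "S0 = ln (max T 1)"
  have S0: "S0 \<ge> 0" unfolding S0_def by simp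
  have nn: "\<And>t. t \<ge> 0 \<Longrightarrow> \<omega> t \<ge> 0" using wf unfolding weight_function_def by blast
  show ?thesis
  proof (rule bdd_aboveI2)
    fix s :: real assume s: "s \<in> {0..}"
    show "s * a - \<omega> (exp s) \<le> a * S0"
    proof (cases "s \<ge> S0")
      case True
      have "exp s \<ge> max T 1" using True unfolding S0_def
        by (metis exp_ln exp_le_cancel_iff max.strict_coboundedI2 zero_less_one)
      hence "norm (ln (exp s)) \<le> (1/(a+1)) * norm (\<omega> (exp s))" using T by (meson max.bounded_iff)
      hence "s \<le> \<omega> (exp s) / (a+1)" using s nn[of "exp s"] by simp
      hence "s * (a+1) \<le> \<omega> (exp s)" using a by (simp add: field_simps)
      thus ?thesis using s a S0 by (simp add: algebra_simps) (smt (verit) mult_nonneg_nonneg)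
    next
      case False
      have "s * a \<le> S0 * a" using False a by (intro mult_right_mono) auto
      thus ?thesis using nn[of "exp s"] by (simp add: mult.commute)
    qed
  qed
qed

lemma omega_le:
  assumes wf: "weight_function \<omega>" and t: "t > 0"
    and int: "(\<lambda>u. \<omega> (t * u) / u\<^sup>2) integrable_on {1..}"
  shows "\<omega> t \<le> integral {1..} (\<lambda>u. \<omega> (t * u) / u\<^sup>2)"
proof -
  have mono: "mono_on {0..} \<omega>" using wf unfolding weight_function_def by blast
  have h: "((\<lambda>x::real. 1 / x ^ 2) has_integral 1) {1..}"
    using has_integral_inverse_power_to_inf[of 2 1] by simp
  have h2: "((\<lambda>u::real. \<omega> t * (1 / u ^ 2)) has_integral \<omega> t * 1) {1..}"
    by (rule has_integral_mult_right[OF h])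
  have "\<omega> t * 1 \<le> integral {1..} (\<lambda>u. \<omega> (t * u) / u\<^sup>2)"
  proof (rule has_integral_le[OF h2 integrable_integral[OF int]])
    fix u :: real assume u: "u \<in> {1..}"
    have "\<omega> t \<le> \<omega> (t * u)" using u t
      by (intro mono_onD[OF mono]) (auto simp: mult_le_cancel_left1)
    thus "\<omega> t * (1 / u ^ 2) \<le> \<omega> (t * u) / u\<^sup>2" using u
      by (simp add: divide_right_mono)
  qed
  thus ?thesis by simp
qed

theorem lemma3p15:
  fixes \<omega> \<sigma> :: "real \<Rightarrow> real"
  assumes "weight_function \<omega>" and "non_quasianalytic \<omega>"
    and "heir \<sigma> \<omega>"
    and "\<forall>t\<in>{0..1}. \<omega> t = 0" and "\<forall>t\<in>{0..1}. \<sigma> t = 0"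
  shows "\<exists>C\<ge>1. \<forall>x>0. \<forall>k::nat.
           weight_matrix \<sigma> x k \<le> exp (1 / x) * weight_matrix \<omega> (C * x) k"
proof -
  have wfs: "weight_function \<sigma>" using assms(3) unfolding heir_def by blast
  obtain C where C: "C > 0" and hC: "\<And>t. t > 0 \<Longrightarrow> (\<lambda>u. \<omega> (t * u) / u\<^sup>2) integrable_on {1..} \<and>
        integral {1..} (\<lambda>u. \<omega> (t * u) / u\<^sup>2) \<le> C * \<sigma> t + C"
    using assms(3) unfolding heir_def by blast
  define D where "D = max C 1"
  have D1: "D \<ge> 1" unfolding D_def by simp
  have nns: "\<And>t. t \<ge> 0 \<Longrightarrow> \<sigma> t \<ge> 0" using wfs unfolding weight_function_def by blast
  have key: "\<omega> t / D \<le> \<sigma> t + 1" if t: "t > 0" for t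
  proof -
    have "\<omega> t \<le> C * \<sigma> t + C" using omega_le[OF assms(1) t] hC[OF t] by auto
    also have "\<dots> \<le> D * \<sigma> t + D" using nns[of t] t unfolding D_def
      by (smt (verit) mult_right_mono max.cobounded1)
    finally show ?thesis using D1 by (simp add: field_simps)
  qed
  have main: "phi_conj \<sigma> y \<le> phi_conj \<omega> (D * y) / D + 1" if y: "y \<ge> 0" for y
    unfolding phi_conj_def
  proof (rule cSUP_least)
    show "{0::real..} \<noteq> {}" by auto
    fix s :: real assume s: "s \<in> {0..}"
    have bdd: "bdd_above ((\<lambda>s. s * (D * y) - \<omega> (exp s)) ` {0..})"
      by (rule bdd_conj[OF assms(1)]) (use D1 y in simp)
    have "s * (D * y) - \<omega> (exp s) \<le> (SUP s\<in>{0..}. s * (D * y) - \<omega> (exp s))"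
      by (rule cSUP_upper[OF s bdd])
    hence "(s * (D * y) - \<omega> (exp s)) / D \<le> (SUP s\<in>{0..}. s * (D * y) - \<omega> (exp s)) / D"
      using D1 by (simp add: divide_right_mono)
    moreover have "(s * (D * y) - \<omega> (exp s)) / D = s * y - \<omega> (exp s) / D"
      using D1 by (simp add: field_simps)
    ultimately show "s * y - \<sigma> (exp s) \<le> (SUP s\<in>{0..}. s * (D * y) - \<omega> (exp s)) / D + 1"
      using key[of "exp s"] by simp
  qed
  show ?thesis
  proof (intro exI[of _ D] conjI allI impI D1)
    fix x :: real and k :: nat assume x: "x > 0"
    have m: "phi_conj \<sigma> (x * real k) \<le> phi_conj \<omega> (D * (x * real k)) / D + 1"
      using main[of "x * real k"] x by simp
    have "phi_conj \<sigma> (x * real k) / x \<le> 1 / x + phi_conj \<omega> (D * x * real k) / (D * x)"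
      using divide_right_mono[OF m, of x] x D1 by (simp add: field_simps mult.assoc)
    hence "exp (phi_conj \<sigma> (x * real k) / x) \<le> exp (1 / x + phi_conj \<omega> (D * x * real k) / (D * x))"
      by simp
    thus "weight_matrix \<sigma> x k \<le> exp (1 / x) * weight_matrix \<omega> (D * x) k"
      unfolding weight_matrix_def by (simp add: exp_add)
  qed
qed

end
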